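(* Let $L$ and ${}^*L=e^{\sigma(x)}L+\beta$ be as in the context. Then the torsion vectors satisfy $${}^*c_i=c_i+\frac{n+1}{2\,{}^*L}m_i .$$
   Context: $M$ is a smooth manifold of dimension $n$ with local coordinates $(x^i)$ and induced fiber coordinates $(y^i)$ on $TM$. $L(x,y)$ is a Finsler metric: positive and smooth for $y\neq0$, positively homogeneous of degree 1 in $y$, with positive definite fundamental tensor $g_{ij}=\frac12\frac{\partial^2L^2}{\partial y^i\partial y^j}$ and inverse $g^{ij}$. $\sigma(x)$ is a smooth function on $M$ and $\beta(x,y)=b_i(x)y^i$ is a 1-form; the conformal $\beta$-change is ${}^*L=e^{\sigma(x)}L+\beta$, assumed to be again a Finsler metric. Notation: $l_i=\partial L/\partial y^i$, $c_{ijk}=\frac12\partial g_{ij}/\partial y^k$, $c_i=g^{jk}c_{ijk}$, $m_i=b_i-\frac{\beta}{L}l_i$. Quantities built from ${}^*L$ by the same formulas (using ${}^*g_{ij}$ and its inverse ${}^*g^{ij}$) are denoted with a left asterisk; in particular ${}^*c_i={}^*g^{jk}\,{}^*c_{ijk}$. *)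

theory Defs
  imports "HOL-Analysis.Analysis"
begin

definition dirder :: "('a::real_normed_vector \<Rightarrow> real) \<Rightarrow> 'a \<Rightarrow> 'a \<Rightarrow> real" where
  "dirder f v p = deriv (\<lambda>t. f (p + t *\<^sub>R v)) 0"

fun iter_dirder :: "('a::real_normed_vector \<Rightarrow> real) \<Rightarrow> 'a list \<Rightarrow> 'a \<Rightarrow> real" where
  "iter_dirder f [] = f"
| "iter_dirder f (v # vs) = dirder (iter_dirder f vs) v"

definition smooth_on :: "'a::euclidean_space set \<Rightarrow> ('a \<Rightarrow> real) \<Rightarrow> bool" where
  "smooth_on S f \<longleftrightarrow>
     (\<forall>vs. set vs \<subseteq> Basis \<longrightarrow>
        continuous_on S (iter_dirder f vs) \<and>
        (\<forall>v\<in>Basis. \<forall>p\<in>S. (\<lambda>t. iter_dirder f vs (p + t *\<^sub>R v)) differentiable (at 0)))"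

definition ypd :: "(real^'n \<Rightarrow> real) \<Rightarrow> 'n \<Rightarrow> real^'n \<Rightarrow> real" where
  "ypd F i y = dirder F (axis i 1) y"

definition fund :: "(real^'n \<Rightarrow> real^'n \<Rightarrow> real) \<Rightarrow> real^'n \<Rightarrow> real^'n \<Rightarrow> real^'n^'n" where
  "fund L x y = (\<chi> i j. (1/2) * ypd (\<lambda>z. ypd (\<lambda>w. (L x w)^2) j z) i y)"

definition cartan :: "(real^'n \<Rightarrow> real^'n \<Rightarrow> real) \<Rightarrow> real^'n \<Rightarrow> real^'n \<Rightarrow> 'n \<Rightarrow> 'n \<Rightarrow> 'n \<Rightarrow> real" where
  "cartan L x y i j k = (1/2) * ypd (\<lambda>z. fund L x z $ i $ j) k y"

definition torsion :: "(real^'n \<Rightarrow> real^'n \<Rightarrow> real) \<Rightarrow> real^'n \<Rightarrow> real^'n \<Rightarrow> 'n \<Rightarrow> real" where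
  "torsion L x y i = (\<Sum>j\<in>UNIV. \<Sum>k\<in>UNIV. matrix_inv (fund L x y) $ j $ k * cartan L x y i j k)"

(* Finsler metric on the coordinate domain U (local coordinates x, fibre coordinates y) *)
definition finsler :: "(real^'n) set \<Rightarrow> (real^'n \<Rightarrow> real^'n \<Rightarrow> real) \<Rightarrow> bool" where
  "finsler U L \<longleftrightarrow>
     smooth_on (U \<times> (UNIV - {0})) (\<lambda>p. L (fst p) (snd p)) \<and>
     (\<forall>x\<in>U. \<forall>y. y \<noteq> 0 \<longrightarrow>
        L x y > 0 \<and>
        (\<forall>t>0. L x (t *\<^sub>R y) = t * L x y) \<and>
        (\<forall>v. v \<noteq> 0 \<longrightarrow> v \<bullet> (fund L x y *v v) > 0))"

end

theory Submission
  imports Defs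
begin


definition outer :: "real^'n \<Rightarrow> real^'n \<Rightarrow> real^'n^'n" where
  "outer u v = (\<chi> i j. u$i * v$j)"

lemma matrix_inv_props:
  fixes A :: "real^'n^'n"
  assumes "invertible A"
  shows "A ** matrix_inv A = mat 1" "matrix_inv A ** A = mat 1"
proof -
  have "\<exists>A'. A ** A' = mat 1 \<and> A' ** A = mat 1" using assms unfolding invertible_def by blast
  from someI_ex[OF this] show "A ** matrix_inv A = mat 1" "matrix_inv A ** A = mat 1"
    unfolding matrix_inv_def by auto
qed

lemma matrix_inv_sym:
  fixes A :: "real^'n^'n"
  assumes "invertible A" "transpose A = A"
  shows "transpose (matrix_inv A) = matrix_inv A"
proof -
  have "transpose (matrix_inv A) ** A = mat 1"
    by (metis assms matrix_inv_props(1) matrix_transpose_mul transpose_mat)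
  then have "transpose (matrix_inv A) = transpose (matrix_inv A) ** (A ** matrix_inv A)"
    using matrix_inv_props[OF assms(1)] by simp
  also have "\<dots> = matrix_inv A" using \<open>transpose (matrix_inv A) ** A = mat 1\<close>
    by (simp add: matrix_mul_assoc)
  finally show ?thesis .
qed

lemma sym_entry: "transpose A = A \<Longrightarrow> A $ i $ j = A $ j $ i"
  by (metis transpose_def vec_lambda_beta)

lemma mult_outer: "M ** outer u v = outer (M *v u) v"
  by (simp add: outer_def matrix_matrix_mult_def matrix_vector_mult_def vec_eq_iff sum_distrib_right mult.assoc)

lemma outer_mult: "outer u v ** M = outer u (v v* M)"
  by (simp add: outer_def matrix_matrix_mult_def vector_matrix_mult_def vec_eq_iff sum_distrib_left mult.assoc)

lemma vm_sym:
  fixes M :: "real^'n^'n"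
  assumes "transpose M = M" shows "v v* M = M *v v"
proof -
  have "v v* M = transpose M *v v" by (simp only: transpose_matrix_vector)
  then show ?thesis using assms by simp
qed

lemma scaleR_matmul_left: "(k *\<^sub>R X) ** Y = k *\<^sub>R (X ** (Y::real^'n^'n))" for X :: "real^'n^'n"
  by (simp add: matrix_matrix_mult_def vec_eq_iff sum_distrib_left mult.assoc)

lemma scaleR_matmul_right: "X ** (k *\<^sub>R Y) = k *\<^sub>R (X ** (Y::real^'n^'n))" for X :: "real^'n^'n"
  by (simp add: matrix_matrix_mult_def vec_eq_iff sum_distrib_left algebra_simps)

lemma matmul_diff_right: "X ** (Y - Z) = X ** Y - X ** (Z::real^'n^'n)" for X :: "real^'n^'n"
  by (simp add: matrix_matrix_mult_def vec_eq_iff sum_subtractf algebra_simps)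

lemma matmul_add_left: "(X + Y) ** Z = X ** Z + Y ** (Z::real^'n^'n)" for X :: "real^'n^'n"
  by (simp add: matrix_matrix_mult_def vec_eq_iff sum.distrib algebra_simps)

lemma matmul_diff_left: "(X - Y) ** Z = X ** Z - Y ** (Z::real^'n^'n)" for X :: "real^'n^'n"
  by (simp add: matrix_matrix_mult_def vec_eq_iff sum_subtractf algebra_simps)

lemma mv_scaleR: "X *v (k *\<^sub>R v) = k *\<^sub>R (X *v v)" for X :: "real^'n^'n"
  by (simp add: matrix_vector_mult_def vec_eq_iff sum_distrib_left algebra_simps)

lemma inner_sum: "(u::real^'n) \<bullet> v = (\<Sum>j\<in>UNIV. u$j * v$j)"
  by (simp add: inner_vec_def)



lemma alg_core:
  fixes y l b :: "real^'n" and H g A :: "real^'n^'n" and T :: "'n \<Rightarrow> 'n \<Rightarrow> 'n \<Rightarrow> real"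
    and F c G :: real and i :: 'n
  assumes F: "F > 0" and c: "c > 0" and Gd: "G = c*F + b \<bullet> y" and Gp: "G > 0"
    and ly: "l \<bullet> y = F" and Hs: "\<And>i j. H$i$j = H$j$i"
    and Hy: "\<And>i. (\<Sum>j\<in>UNIV. H$i$j * y$j) = 0"
    and Ty1: "\<And>i j. (\<Sum>k\<in>UNIV. T i j k * y$k) = - H$i$j"
    and Ty2: "\<And>i k. (\<Sum>j\<in>UNIV. T i j k * y$j) = - H$i$k"
    and gdef: "g = (\<chi> i j. l$i*l$j + F * H$i$j)" and invg: "invertible g"
    and Adef: "A = (\<chi> i j. (c*l$i + b$i)*(c*l$j + b$j) + G * (c*H$i$j))" and invA: "invertible A"
  shows "(\<Sum>j\<in>UNIV. \<Sum>k\<in>UNIV. matrix_inv A $j$k * ((1/2)*((c*H$k$i)*(c*l$j+b$j) + (c*l$i+b$i)*(c*H$k$j)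
              + (c*l$k+b$k)*(c*H$i$j) + G*(c*T i j k))))
       = (\<Sum>j\<in>UNIV. \<Sum>k\<in>UNIV. matrix_inv g $j$k * ((1/2)*(H$k$i*l$j + l$i*H$k$j + l$k*H$i$j + F*T i j k)))
         + (real CARD('n) + 1) / (2*G) * (b$i - (b\<bullet>y)/F * l$i)"
proof -
  define p where "p = c *\<^sub>R l + b"
  define \<beta> where "\<beta> = b \<bullet> y"
  define k where "k = G*c/F"
  define m where "m = b - (\<beta>/F) *\<^sub>R l"
  define gi where "gi = matrix_inv g"
  define Ai where "Ai = matrix_inv A"
  have pc: "\<And>j. p$j = c*l$j + b$j" by (simp add: p_def)
  have mc: "\<And>j. m$j = b$j - \<beta>/F * l$j" by (simp add: m_def)
  have Fne: "F \<noteq> 0" using F by simp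
  have kpos: "k > 0" using F c Gp by (simp add: k_def)
  have py: "p \<bullet> y = G" using Gd ly by (simp add: p_def \<beta>_def inner_add_left)
  have my: "m \<bullet> y = 0" using F ly by (simp add: m_def \<beta>_def inner_diff_left)
  have Hy': "\<And>i. (\<Sum>j\<in>UNIV. H$j$i * y$j) = 0"
  proof -
    fix i
    have "(\<Sum>j\<in>UNIV. H$j$i * y$j) = (\<Sum>j\<in>UNIV. H$i$j * y$j)"
      by (intro sum.cong refl) (metis Hs)
    then show "(\<Sum>j\<in>UNIV. H$j$i * y$j) = 0" using Hy by simp
  qed
  have gsym: "transpose g = g" unfolding gdef transpose_def vec_eq_iff by (simp add: Hs[of _ "_::'n"] mult.commute)
  have Asym: "transpose A = A" unfolding Adef transpose_def vec_eq_iff by (simp add: Hs[of _ "_::'n"] mult.commute)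
  note gi1 = matrix_inv_props[OF invg, folded gi_def]
  note Ai1 = matrix_inv_props[OF invA, folded Ai_def]
  have gisym: "transpose gi = gi" using matrix_inv_sym[OF invg gsym] by (simp add: gi_def)
  have Aisym: "transpose Ai = Ai" using matrix_inv_sym[OF invA Asym] by (simp add: Ai_def)
  have gy: "g *v y = F *\<^sub>R l"
  proof -
    have "\<And>i. (\<Sum>j\<in>UNIV. (l$i*l$j + F*H$i$j)*y$j) = l$i * (\<Sum>j\<in>UNIV. l$j*y$j) + F * (\<Sum>j\<in>UNIV. H$i$j*y$j)"
      by (simp add: algebra_simps sum.distrib sum_distrib_left)
    then show ?thesis using Hy ly by (simp add: gdef matrix_vector_mult_def vec_eq_iff inner_sum)
  qed
  have gil: "gi *v l = (1/F) *\<^sub>R y"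
  proof -
    have "y = gi *v (g *v y)" by (simp add: matrix_vector_mul_assoc gi1)
    also have "\<dots> = F *\<^sub>R (gi *v l)" by (simp add: gy mv_scaleR)
    finally show ?thesis using F by simp
  qed
  have Ay: "A *v y = G *\<^sub>R p"
  proof -
    have "\<And>i. (\<Sum>j\<in>UNIV. ((c*l$i + b$i)*(c*l$j + b$j) + G*(c*H$i$j))*y$j)
        = (c*l$i + b$i) * (\<Sum>j\<in>UNIV. (c*l$j + b$j)*y$j) + G*c * (\<Sum>j\<in>UNIV. H$i$j*y$j)"
      by (simp add: algebra_simps sum.distrib sum_distrib_left)
    moreover have "(\<Sum>j\<in>UNIV. (c*l$j + b$j)*y$j) = G" using py by (simp add: inner_sum pc)
    ultimately show ?thesis using Hy by (simp add: Adef matrix_vector_mult_def vec_eq_iff pc)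
  qed
  have Aip: "Ai *v p = (1/G) *\<^sub>R y"
  proof -
    have "y = Ai *v (A *v y)" by (simp add: matrix_vector_mul_assoc Ai1)
    also have "\<dots> = G *\<^sub>R (Ai *v p)" by (simp add: Ay mv_scaleR)
    finally show ?thesis using Gp by simp
  qed
  have kgA: "k *\<^sub>R g - A = k *\<^sub>R outer l l - outer p p"
    using F c by (simp add: vec_eq_iff gdef Adef outer_def pc k_def field_simps)
  have decomp: "k *\<^sub>R Ai = gi + k *\<^sub>R outer (Ai *v l) ((1/F) *\<^sub>R y) - outer ((1/G) *\<^sub>R y) (gi *v p)"
  proof -
    have "k *\<^sub>R Ai = Ai ** ((k *\<^sub>R g) ** gi)"
      by (simp add: scaleR_matmul_left scaleR_matmul_right gi1)
    also have "\<dots> = Ai ** ((A + (k *\<^sub>R g - A)) ** gi)" by simp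
    also have "\<dots> = gi + Ai ** ((k *\<^sub>R g - A) ** gi)"
      by (simp only: matmul_add_left matrix_add_ldistrib matrix_mul_assoc Ai1 matrix_mul_lid)
    also have "Ai ** ((k *\<^sub>R g - A) ** gi) = k *\<^sub>R outer (Ai *v l) (l v* gi) - outer (Ai *v p) (p v* gi)"
      unfolding kgA
      by (simp only: matmul_diff_left matmul_diff_right outer_mult scaleR_matmul_right
            scaleR_matmul_left mult_outer)
    finally show ?thesis by (simp add: vm_sym gisym gil Aip)
  qed
  define w where "w = (1/F) *\<^sub>R (Ai *v l)"
  define v where "v = (1/(k*G)) *\<^sub>R (gi *v p)"
  have Aient: "\<And>j q. Ai$j$q = gi$j$q / k + w$j * y$q - y$j * v$q"
  proof -
    fix j q
    have "k * Ai$j$q = gi$j$q + k * ((Ai *v l)$j * ((1/F) * y$q)) - (1/G) * y$j * (gi *v p)$q"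
      using arg_cong[OF decomp, of "\<lambda>M. M$j$q"] by (simp add: outer_def)
    also have "\<dots> = k * (gi$j$q / k + w$j * y$q - y$j * v$q)"
      using kpos Gp F by (simp add: w_def v_def field_simps)
    finally show "Ai$j$q = gi$j$q / k + w$j * y$q - y$j * v$q"
      using kpos by simp
  qed
  define Cs where "Cs = (\<lambda>j q. (1/2)*((c*H$q$i)*(c*l$j+b$j) + (c*l$i+b$i)*(c*H$q$j)
              + (c*l$q+b$q)*(c*H$i$j) + G*(c*T i j q)))"
  define C where "C = (\<lambda>j q. (1/2)*(H$q$i*l$j + l$i*H$q$j + l$q*H$i$j + F*T i j q))"
  have pysum: "(\<Sum>q\<in>UNIV. p$q * y$q) = G" using py by (simp add: inner_sum)
  have mysum: "(\<Sum>q\<in>UNIV. m$q * y$q) = 0" using my by (simp add: inner_sum)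
  have lysum: "(\<Sum>q\<in>UNIV. l$q * y$q) = F" using ly by (simp add: inner_sum)
  have K1: "(\<Sum>q\<in>UNIV. Cs j q * y$q) = 0" for j
  proof -
    have "(\<Sum>q\<in>UNIV. Cs j q * y$q) = (1/2)*(c*p$j*(\<Sum>q\<in>UNIV. H$q$i*y$q) + c*p$i*(\<Sum>q\<in>UNIV. H$q$j*y$q)
        + c*H$i$j*(\<Sum>q\<in>UNIV. p$q*y$q) + G*c*(\<Sum>q\<in>UNIV. T i j q*y$q))"
      by (simp add: Cs_def pc algebra_simps sum.distrib sum_distrib_left)
    then show ?thesis using Hy' Ty1 pysum by simp
  qed
  have K2: "(\<Sum>j\<in>UNIV. Cs j q * y$j) = 0" for q
  proof -
    have "(\<Sum>j\<in>UNIV. Cs j q * y$j) = (1/2)*(c*H$q$i*(\<Sum>j\<in>UNIV. p$j*y$j) + c*p$i*(\<Sum>j\<in>UNIV. H$q$j*y$j)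
        + c*p$q*(\<Sum>j\<in>UNIV. H$i$j*y$j) + G*c*(\<Sum>j\<in>UNIV. T i j q*y$j))"
      by (simp add: Cs_def pc algebra_simps sum.distrib sum_distrib_left)
    then show ?thesis using Hy Ty2 pysum Hs[of q i] by simp
  qed
  have CsC: "Cs j q = k * C j q + (c/2)*(H$q$i*m$j + m$i*H$q$j + m$q*H$i$j)" for j q
    using F by (simp add: Cs_def C_def mc k_def Gd \<beta>_def field_simps)
  have step1: "(\<Sum>j\<in>UNIV. \<Sum>q\<in>UNIV. Ai$j$q * Cs j q) = (1/k) * (\<Sum>j\<in>UNIV. \<Sum>q\<in>UNIV. gi$j$q * Cs j q)"
  proof -
    have a: "(\<Sum>j\<in>UNIV. \<Sum>q\<in>UNIV. Ai$j$q * Cs j q) = (\<Sum>j\<in>UNIV. \<Sum>q\<in>UNIV. gi$j$q/k * Cs j q)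
        + (\<Sum>j\<in>UNIV. \<Sum>q\<in>UNIV. w$j * y$q * Cs j q) - (\<Sum>j\<in>UNIV. \<Sum>q\<in>UNIV. y$j * v$q * Cs j q)"
      by (simp add: Aient algebra_simps sum.distrib sum_subtractf)
    have b: "(\<Sum>j\<in>UNIV. \<Sum>q\<in>UNIV. w$j * y$q * Cs j q) = (\<Sum>j\<in>UNIV. w$j * (\<Sum>q\<in>UNIV. Cs j q * y$q))"
      by (simp add: sum_distrib_left algebra_simps)
    have c: "(\<Sum>j\<in>UNIV. \<Sum>q\<in>UNIV. y$j * v$q * Cs j q) = (\<Sum>q\<in>UNIV. v$q * (\<Sum>j\<in>UNIV. Cs j q * y$j))"
      by (subst sum.swap) (simp add: sum_distrib_left algebra_simps)
    show ?thesis unfolding a b c K1 K2 by (simp add: sum_divide_distrib sum_distrib_left)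
  qed
  have giH: "(\<Sum>q\<in>UNIV. gi$j$q * H$q$r) = ((if j = r then 1 else 0) - y$j*l$r/F)/F" for j r
  proof -
    have e: "\<And>q. H$q$r = (g$q$r - l$q*l$r)/F" using F by (simp add: gdef field_simps)
    have "(\<Sum>q\<in>UNIV. gi$j$q * H$q$r) = (\<Sum>q\<in>UNIV. (gi$j$q*g$q$r - gi$j$q*l$q*l$r)/F)"
      by (intro sum.cong refl) (simp add: e algebra_simps diff_divide_distrib)
    also have "\<dots> = ((\<Sum>q\<in>UNIV. gi$j$q*g$q$r) - (\<Sum>q\<in>UNIV. gi$j$q*l$q)*l$r)/F"
      by (simp add: sum_divide_distrib[symmetric] sum_subtractf sum_distrib_right)
    also have "(\<Sum>q\<in>UNIV. gi$j$q*g$q$r) = (gi ** g)$j$r" by (simp add: matrix_matrix_mult_def)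
    also have "(\<Sum>q\<in>UNIV. gi$j$q*l$q) = (gi *v l)$j" by (simp add: matrix_vector_mult_def)
    finally show ?thesis using gi1 gil by (simp add: mat_def)
  qed
  have S1: "(\<Sum>j\<in>UNIV. \<Sum>q\<in>UNIV. gi$j$q * (H$q$i*m$j)) = m$i/F"
  proof -
    have "(\<Sum>j\<in>UNIV. \<Sum>q\<in>UNIV. gi$j$q * (H$q$i*m$j)) = (\<Sum>j\<in>UNIV. m$j * (\<Sum>q\<in>UNIV. gi$j$q * H$q$i))"
      by (simp add: sum_distrib_left algebra_simps)
    also have "\<dots> = (\<Sum>j\<in>UNIV. (if j = i then m$j/F else 0) - m$j*y$j * l$i/F/F)"
      by (intro sum.cong refl) (simp only: giH, simp add: field_simps Fne)
    also have "\<dots> = (\<Sum>j\<in>UNIV. (if j = i then m$j/F else 0)) - (\<Sum>j\<in>UNIV. m$j*y$j) * l$i/F/F"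
      by (simp add: sum_subtractf sum_divide_distrib sum_distrib_right)
    finally show ?thesis using mysum by simp
  qed
  have S2: "(\<Sum>j\<in>UNIV. \<Sum>q\<in>UNIV. gi$j$q * H$q$j) = (real CARD('n) - 1)/F"
  proof -
    have "(\<Sum>j\<in>UNIV. \<Sum>q\<in>UNIV. gi$j$q * H$q$j) = (\<Sum>j\<in>(UNIV::'n set). 1/F) - (\<Sum>j\<in>UNIV. l$j*y$j)/F/F"
    proof -
      have "(\<Sum>j\<in>UNIV. \<Sum>q\<in>UNIV. gi$j$q * H$q$j) = (\<Sum>j\<in>(UNIV::'n set). 1/F - l$j*y$j/F/F)"
        by (intro sum.cong refl) (simp only: giH, simp add: field_simps Fne)
      then show ?thesis by (simp add: sum_subtractf sum_divide_distrib)
    qed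
    then show ?thesis using lysum F by (simp add: field_simps)
  qed
  have S3: "(\<Sum>j\<in>UNIV. \<Sum>q\<in>UNIV. gi$j$q * (m$q*H$i$j)) = m$i/F"
  proof -
    have "(\<Sum>j\<in>UNIV. \<Sum>q\<in>UNIV. gi$j$q * (m$q*H$i$j)) = (\<Sum>q\<in>UNIV. \<Sum>j\<in>UNIV. gi$q$j * H$j$i * m$q)"
      by (subst sum.swap) (simp add: sym_entry[OF gisym, of _ "_::'n"] Hs[of i] algebra_simps)
    also have "\<dots> = (\<Sum>q\<in>UNIV. m$q * (\<Sum>j\<in>UNIV. gi$q$j * H$j$i))"
      by (simp add: sum_distrib_left algebra_simps)
    also have "\<dots> = (\<Sum>q\<in>UNIV. (if q = i then m$q/F else 0) - m$q*y$q * l$i/F/F)"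
      by (intro sum.cong refl) (simp only: giH, simp add: field_simps Fne)
    also have "\<dots> = (\<Sum>q\<in>UNIV. (if q = i then m$q/F else 0)) - (\<Sum>q\<in>UNIV. m$q*y$q) * l$i/F/F"
      by (simp add: sum_subtractf sum_divide_distrib sum_distrib_right)
    finally show ?thesis using mysum by simp
  qed
  have step2: "(\<Sum>j\<in>UNIV. \<Sum>q\<in>UNIV. gi$j$q * Cs j q) = k * (\<Sum>j\<in>UNIV. \<Sum>q\<in>UNIV. gi$j$q * C j q)
       + (c/2) * ((\<Sum>j\<in>UNIV. \<Sum>q\<in>UNIV. gi$j$q * (H$q$i*m$j)) + m$i * (\<Sum>j\<in>UNIV. \<Sum>q\<in>UNIV. gi$j$q * H$q$j)
          + (\<Sum>j\<in>UNIV. \<Sum>q\<in>UNIV. gi$j$q * (m$q*H$i$j)))"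
    by (simp add: CsC algebra_simps sum.distrib sum_distrib_left)
  have fin: "(\<Sum>j\<in>UNIV. \<Sum>q\<in>UNIV. Ai$j$q * Cs j q) = (\<Sum>j\<in>UNIV. \<Sum>q\<in>UNIV. gi$j$q * C j q)
       + (real CARD('n) + 1) / (2*G) * m$i"
    unfolding step1 step2 S1 S2 S3 using kpos F c Gp
    by (simp add: k_def field_simps)
  show ?thesis using fin by (simp add: Ai_def gi_def Cs_def C_def mc \<beta>_def)
qed



abbreviation ax :: "'n \<Rightarrow> real^'n" where "ax i \<equiv> axis i 1"

fun yit :: "(real^'n \<Rightarrow> real) \<Rightarrow> 'n list \<Rightarrow> real^'n \<Rightarrow> real" where
  "yit h [] = h"
| "yit h (i # is) = ypd (yit h is) i"

definition ysm :: "(real^'n) set \<Rightarrow> (real^'n \<Rightarrow> real) \<Rightarrow> bool" where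
  "ysm V h \<longleftrightarrow> (\<forall>is. continuous_on V (yit h is) \<and>
      (\<forall>j. \<forall>p\<in>V. (\<lambda>t. yit h is (p + t *\<^sub>R ax j)) differentiable (at 0)))"

lemma yit_ypd: "yit (ypd h i) is = yit h (is @ [i])"
  by (induction "is") auto

lemma ysm_ypd: "ysm V h \<Longrightarrow> ysm V (ypd h i)"
  unfolding ysm_def yit_ypd by blast

lemma ysm_cont: "ysm V h \<Longrightarrow> continuous_on V h"
  unfolding ysm_def by (metis yit.simps(1))

lemma ysm_diff: "ysm V h \<Longrightarrow> p \<in> V \<Longrightarrow> (\<lambda>t. h (p + t *\<^sub>R ax j)) differentiable (at 0)"
  unfolding ysm_def by (metis yit.simps(1))

lemma ypd_DERIV0: "ysm V h \<Longrightarrow> p \<in> V \<Longrightarrow> ((\<lambda>t. h (p + t *\<^sub>R ax j)) has_real_derivative ypd h j p) (at 0)"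
  unfolding ypd_def dirder_def
  by (simp add: DERIV_deriv_iff_real_differentiable ysm_diff)

lemma ypd_DERIV:
  assumes "ysm V h" "p + t0 *\<^sub>R ax j \<in> V"
  shows "((\<lambda>t. h (p + t *\<^sub>R ax j)) has_real_derivative ypd h j (p + t0 *\<^sub>R ax j)) (at t0)"
proof -
  have "((\<lambda>t. h ((p + t0 *\<^sub>R ax j) + t *\<^sub>R ax j)) has_real_derivative ypd h j (p + t0 *\<^sub>R ax j)) (at 0)"
    by (rule ypd_DERIV0[OF assms])
  then have "((\<lambda>t. h (p + (t + t0) *\<^sub>R ax j)) has_real_derivative ypd h j (p + t0 *\<^sub>R ax j)) (at 0)"
    by (simp add: scaleR_add_left add_ac)
  then show ?thesis using DERIV_shift[of "\<lambda>t. h (p + t *\<^sub>R ax j)" _ 0 t0] by simp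
qed

lemma ypd_eqI: "((\<lambda>t. h (p + t *\<^sub>R ax j)) has_real_derivative D) (at 0) \<Longrightarrow> ypd h j p = D"
  unfolding ypd_def dirder_def by (rule DERIV_imp_deriv)

lemma ev_line: "open V \<Longrightarrow> p \<in> V \<Longrightarrow> eventually (\<lambda>t. p + t *\<^sub>R (v::real^'n) \<in> V) (nhds (0::real))"
proof -
  assume "open V" "p \<in> V"
  have "isCont (\<lambda>t::real. p + t *\<^sub>R v) 0" by (intro continuous_intros)
  then have "((\<lambda>t::real. p + t *\<^sub>R v) \<longlongrightarrow> (\<lambda>t::real. p + t *\<^sub>R v) 0) (nhds 0)"
    unfolding isCont_def by (rule tendsto_at_iff_tendsto_nhds[THEN iffD1])
  then have "((\<lambda>t::real. p + t *\<^sub>R v) \<longlongrightarrow> p) (nhds 0)" by simp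
  then show ?thesis using \<open>open V\<close> \<open>p \<in> V\<close> by (rule topological_tendstoD)
qed

lemma ypd_local:
  assumes "open V" "p \<in> V" "\<And>z. z \<in> V \<Longrightarrow> f z = g z"
  shows "ypd f j p = ypd g j p"
  unfolding ypd_def dirder_def
proof (rule deriv_cong_ev[OF _ refl])
  show "\<forall>\<^sub>F t in nhds 0. f (p + t *\<^sub>R ax j) = g (p + t *\<^sub>R ax j)"
    using ev_line[OF assms(1,2), of "ax j"] by eventually_elim (simp add: assms(3))
qed

lemma ypd_linear: "ypd (\<lambda>z. b \<bullet> z) j p = b $ j"
proof (rule ypd_eqI)
  have "((\<lambda>t. b \<bullet> p + t * b $ j) has_real_derivative b $ j) (at 0)"
    by (auto intro!: derivative_eq_intros)
  moreover have "(\<lambda>t. b \<bullet> (p + t *\<^sub>R ax j)) = (\<lambda>t. b \<bullet> p + t * b $ j)"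
    by (auto simp: inner_add_right inner_axis)
  ultimately show "((\<lambda>t. b \<bullet> (p + t *\<^sub>R ax j)) has_real_derivative b $ j) (at 0)" by simp
qed

lemma smooth_to_ysm:
  fixes L :: "real^'n \<Rightarrow> real^'n \<Rightarrow> real"
  assumes sm: "smooth_on (U \<times> (UNIV - {0})) (\<lambda>p. L (fst p) (snd p))" and x: "x \<in> U"
  shows "ysm (UNIV - {0}) (L x)"
proof -
  let ?P = "\<lambda>p. L (fst p) (snd p)"
  let ?vy = "\<lambda>i. (0::real^'n, ax i)"
  have it: "\<forall>x' y'. iter_dirder ?P (map ?vy is) (x', y') = yit (L x') is y'" for "is"
  proof (induction "is")
    case Nil then show ?case by simp
  next
    case (Cons i "is")
    show ?case
    proof (intro allI)
      fix x' y'
      have "iter_dirder ?P (map ?vy (i # is)) (x', y') = deriv (\<lambda>t. iter_dirder ?P (map ?vy is) ((x', y') + t *\<^sub>R ?vy i)) 0"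
        by (simp add: dirder_def)
      also have "\<dots> = deriv (\<lambda>t. yit (L x') is (y' + t *\<^sub>R ax i)) 0"
        using Cons.IH by simp
      finally show "iter_dirder ?P (map ?vy (i # is)) (x', y') = yit (L x') (i # is) y'"
        by (simp add: ypd_def dirder_def)
    qed
  qed
  have basis: "set (map ?vy is) \<subseteq> Basis" for "is"
    by (auto simp: Basis_prod_def)
  show ?thesis unfolding ysm_def
  proof (intro allI conjI ballI)
    fix "is"
    have c: "continuous_on (U \<times> (UNIV - {0})) (iter_dirder ?P (map ?vy is))"
      using sm basis unfolding smooth_on_def by blast
    have "continuous_on (UNIV - {0}) (\<lambda>y'. iter_dirder ?P (map ?vy is) (x, y'))"
      by (rule continuous_on_compose2[OF c]) (auto intro!: continuous_intros simp: x)
    then show "continuous_on (UNIV - {0}) (yit (L x) is)" using it by simp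
    fix j :: 'n and p :: "real^'n"
    assume p: "p \<in> UNIV - {0}"
    have d: "\<forall>v\<in>Basis. \<forall>q\<in>U \<times> (UNIV - {0}). (\<lambda>t. iter_dirder ?P (map ?vy is) (q + t *\<^sub>R v)) differentiable (at 0)"
      using sm basis unfolding smooth_on_def by blast
    have vb: "?vy j \<in> Basis" by (simp add: Basis_prod_def)
    have "(\<lambda>t. iter_dirder ?P (map ?vy is) ((x, p) + t *\<^sub>R ?vy j)) differentiable (at 0)"
      using bspec[OF bspec[OF d vb], of "(x,p)"] p x by simp
    then show "(\<lambda>t. yit (L x) is (p + t *\<^sub>R ax j)) differentiable (at 0)" using it by simp
  qed
qed

lemma mvt_any:
  fixes f f' :: "real \<Rightarrow> real"
  assumes der: "\<And>t. \<bar>t\<bar> \<le> \<bar>b\<bar> \<Longrightarrow> (f has_real_derivative f' t) (at t)"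
  shows "\<exists>z. \<bar>z\<bar> \<le> \<bar>b\<bar> \<and> f b - f 0 = b * f' z"
proof (cases "b > 0")
  case True
  obtain z where "0 < z" "z < b" "f b - f 0 = (b - 0) * f' z"
    using MVT2[OF True, of f f'] der by fastforce
  then show ?thesis by (intro exI[of _ z]) auto
next
  case False
  show ?thesis
  proof (cases "b < 0")
    case True
    obtain z where "b < z" "z < 0" "f 0 - f b = (0 - b) * f' z"
      using MVT2[OF True, of f f'] der by fastforce
    then show ?thesis by (intro exI[of _ z]) (auto simp: algebra_simps)
  next
    case False
    then show ?thesis using \<open>\<not> b > 0\<close> by (intro exI[of _ 0]) auto
  qed
qed

lemma cont_at_ev:
  fixes g :: "real^'n \<Rightarrow> real"
  assumes "open V" "continuous_on V g" "y \<in> V" "e > 0"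
  shows "eventually (\<lambda>z. \<bar>g z - g y\<bar> < e) (nhds y)"
proof -
  have "isCont g y" using assms continuous_on_eq_continuous_at by blast
  then have "(g \<longlongrightarrow> g y) (nhds y)"
    unfolding isCont_def by (rule tendsto_at_iff_tendsto_nhds[THEN iffD1])
  from tendstoD[OF this \<open>e > 0\<close>] show ?thesis by (simp add: dist_real_def)
qed

lemma ysm_frechet:
  fixes h :: "real^'n \<Rightarrow> real"
  assumes V: "open V" and sm: "ysm V h" and y: "y \<in> V"
  shows "(h has_derivative (\<lambda>v. \<Sum>k\<in>UNIV. v$k * ypd h k y)) (at y)"
proof -
  define a where "a = (\<chi> k. ypd h k y)"
  have lin: "(\<lambda>v. \<Sum>k\<in>UNIV. v$k * ypd h k y) = (\<lambda>v. v \<bullet> a)"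
    by (simp add: a_def inner_vec_def)
  show ?thesis unfolding has_derivative_at_alt
  proof (intro conjI allI impI)
    show "bounded_linear (\<lambda>v. \<Sum>k\<in>UNIV. v$k * ypd h k y)" unfolding lin
      by (rule bounded_linear_inner_left)
    fix e :: real assume e: "e > 0"
    define e' where "e' = e / real CARD('n)"
    have e': "e' > 0" using e by (simp add: e'_def)
    have ev: "eventually (\<lambda>z. z \<in> V \<and> (\<forall>k. \<bar>ypd h k z - ypd h k y\<bar> < e')) (nhds y)"
      using eventually_nhds_in_open[OF V y]
        eventually_all_finite[of "\<lambda>z k. \<bar>ypd h k z - ypd h k y\<bar> < e'"]
        cont_at_ev[OF V ysm_cont[OF ysm_ypd[OF sm]] y e']
      by (simp add: eventually_conj_iff)
    then obtain d where d: "d > 0" and dP: "\<And>z. dist z y < d \<Longrightarrow> z \<in> V \<and> (\<forall>k. \<bar>ypd h k z - ypd h k y\<bar> < e')"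
      unfolding eventually_nhds_metric by blast
    show "\<exists>d>0. \<forall>z. norm (z - y) < d \<longrightarrow>
        norm (h z - h y - (\<Sum>k\<in>UNIV. (z - y)$k * ypd h k y)) \<le> e * norm (z - y)"
    proof (intro exI[of _ d] conjI allI impI d)
      fix z assume zd: "norm (z - y) < d"
      define v where "v = z - y"
      define vS where "vS S = (\<chi> k. if k \<in> S then v$k else 0)" for S
      have claim: "\<bar>h (y + vS S) - h y - (\<Sum>k\<in>S. v$k * ypd h k y)\<bar> \<le> e' * (\<Sum>k\<in>S. \<bar>v$k\<bar>)"
        if "finite S" for S
        using that
      proof (induction S rule: finite_induct)
        case empty
        have "vS {} = 0" by (simp add: vS_def vec_eq_iff)
        then show ?case by simp
      next
        case (insert q S)
        have vins: "vS (insert q S) = vS S + v$q *\<^sub>R ax q"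
          using insert.hyps by (auto simp: vS_def vec_eq_iff axis_def)
        have inV: "(y + vS S) + t *\<^sub>R ax q \<in> V \<and> \<bar>ypd h q ((y + vS S) + t *\<^sub>R ax q) - ypd h q y\<bar> < e'"
          if t: "\<bar>t\<bar> \<le> \<bar>v$q\<bar>" for t
        proof -
          have "norm (vS S + t *\<^sub>R ax q) \<le> norm v"
          proof (rule norm_le_componentwise_cart)
            fix k
            show "norm ((vS S + t *\<^sub>R ax q)$k) \<le> norm (v$k)"
              using insert.hyps t by (auto simp: vS_def axis_def)
          qed
          then have "dist ((y + vS S) + t *\<^sub>R ax q) y < d"
            using zd by (simp add: dist_norm v_def add.assoc)
          then show ?thesis using dP by blast
        qed
        obtain t where t: "\<bar>t\<bar> \<le> \<bar>v$q\<bar>"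
          and mv: "h ((y + vS S) + v$q *\<^sub>R ax q) - h ((y + vS S) + 0 *\<^sub>R ax q)
                = v$q * ypd h q ((y + vS S) + t *\<^sub>R ax q)"
          using mvt_any[of "v$q" "\<lambda>t. h ((y + vS S) + t *\<^sub>R ax q)" "\<lambda>t. ypd h q ((y + vS S) + t *\<^sub>R ax q)"]
            ypd_DERIV[OF sm] inV by blast
        have b1: "\<bar>v$q * ypd h q ((y + vS S) + t *\<^sub>R ax q) - v$q * ypd h q y\<bar> \<le> e' * \<bar>v$q\<bar>"
        proof -
          have "\<bar>v$q * ypd h q ((y + vS S) + t *\<^sub>R ax q) - v$q * ypd h q y\<bar>
              = \<bar>v$q\<bar> * \<bar>ypd h q ((y + vS S) + t *\<^sub>R ax q) - ypd h q y\<bar>"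
            by (simp add: abs_mult[symmetric] algebra_simps)
          also have "\<dots> \<le> \<bar>v$q\<bar> * e'" using inV[OF t] by (intro mult_left_mono) auto
          finally show ?thesis by (simp add: mult.commute)
        qed
        have "h (y + vS (insert q S)) - h y - (\<Sum>k\<in>insert q S. v$k * ypd h k y)
            = (h (y + vS S) - h y - (\<Sum>k\<in>S. v$k * ypd h k y))
              + (v$q * ypd h q ((y + vS S) + t *\<^sub>R ax q) - v$q * ypd h q y)"
          using mv insert.hyps by (simp add: vins add.assoc)
        then have "\<bar>h (y + vS (insert q S)) - h y - (\<Sum>k\<in>insert q S. v$k * ypd h k y)\<bar>
            \<le> e' * (\<Sum>k\<in>S. \<bar>v$k\<bar>) + e' * \<bar>v$q\<bar>"
          using insert.IH b1 by linarith
        then show ?case using insert.hyps by (simp add: algebra_simps)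
      qed
      have vU: "vS UNIV = v" by (simp add: vS_def vec_eq_iff)
      have "(\<Sum>k\<in>UNIV. \<bar>v$k\<bar>) \<le> (\<Sum>k\<in>(UNIV::'n set). norm v)"
        by (intro sum_mono) (rule component_le_norm_cart)
      then have sb: "(\<Sum>k\<in>UNIV. \<bar>v$k\<bar>) \<le> real CARD('n) * norm v" by simp
      have "\<bar>h z - h y - (\<Sum>k\<in>UNIV. v$k * ypd h k y)\<bar> \<le> e' * (\<Sum>k\<in>UNIV. \<bar>v$k\<bar>)"
        using claim[of UNIV] vU by (simp add: v_def)
      also have "\<dots> \<le> e' * (real CARD('n) * norm v)" using sb e' by (intro mult_left_mono) auto
      also have "\<dots> = e * norm v" by (simp add: e'_def)
      finally show "norm (h z - h y - (\<Sum>k\<in>UNIV. (z - y)$k * ypd h k y)) \<le> e * norm (z - y)"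
        by (simp add: v_def)
    qed
  qed
qed

lemma norm_two_axes: "norm (t *\<^sub>R ax i + r *\<^sub>R ax j :: real^'n) \<le> \<bar>t\<bar> + \<bar>r\<bar>"
  using norm_triangle_ineq[of "t *\<^sub>R ax i" "r *\<^sub>R ax j"] by simp

lemma clairaut_aux:
  fixes h :: "real^'n \<Rightarrow> real"
  assumes sm: "ysm V h" and dV: "\<And>z. dist z y < d \<Longrightarrow> z \<in> V" and s: "2 * \<bar>s\<bar> < d"
  shows "\<exists>\<xi>. dist \<xi> y \<le> 2 * \<bar>s\<bar> \<and>
    h (y + s *\<^sub>R ax i + s *\<^sub>R ax j) - h (y + s *\<^sub>R ax i) - h (y + s *\<^sub>R ax j) + h y
      = s^2 * ypd (ypd h i) j \<xi>"
proof -
  have inV: "y + t *\<^sub>R ax i + r *\<^sub>R ax j \<in> V" if "\<bar>t\<bar> \<le> \<bar>s\<bar>" "\<bar>r\<bar> \<le> \<bar>s\<bar>" for t r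
  proof -
    have "dist (y + t *\<^sub>R ax i + r *\<^sub>R ax j) y \<le> \<bar>t\<bar> + \<bar>r\<bar>"
      using norm_two_axes[of t i r j] by (simp add: dist_norm add.assoc)
    then show ?thesis using that s by (intro dV) linarith
  qed
  define u where "u t = h ((y + s *\<^sub>R ax j) + t *\<^sub>R ax i) - h (y + t *\<^sub>R ax i)" for t
  have du: "(u has_real_derivative (ypd h i ((y + s *\<^sub>R ax j) + t *\<^sub>R ax i) - ypd h i (y + t *\<^sub>R ax i))) (at t)"
    if "\<bar>t\<bar> \<le> \<bar>s\<bar>" for t
  proof -
    have p1: "(y + s *\<^sub>R ax j) + t *\<^sub>R ax i \<in> V" using inV[OF that, of s] by (simp add: add_ac)
    have p2: "y + t *\<^sub>R ax i \<in> V" using inV[OF that, of 0] by simp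
    show ?thesis unfolding u_def[abs_def]
      by (intro DERIV_diff ypd_DERIV[OF sm] p1 p2)
  qed
  obtain t1 where t1: "\<bar>t1\<bar> \<le> \<bar>s\<bar>"
    and m1: "u s - u 0 = s * (ypd h i ((y + s *\<^sub>R ax j) + t1 *\<^sub>R ax i) - ypd h i (y + t1 *\<^sub>R ax i))"
    using mvt_any[of s u "\<lambda>t. ypd h i ((y + s *\<^sub>R ax j) + t *\<^sub>R ax i) - ypd h i (y + t *\<^sub>R ax i)", OF du] by blast
  define w where "w r = ypd h i ((y + t1 *\<^sub>R ax i) + r *\<^sub>R ax j)" for r
  have dw: "(w has_real_derivative ypd (ypd h i) j ((y + t1 *\<^sub>R ax i) + r *\<^sub>R ax j)) (at r)"
    if "\<bar>r\<bar> \<le> \<bar>s\<bar>" for r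
    unfolding w_def[abs_def]
    by (intro ypd_DERIV[OF ysm_ypd[OF sm]]) (use inV[OF t1 that] in simp)
  obtain r1 where r1: "\<bar>r1\<bar> \<le> \<bar>s\<bar>"
    and m2: "w s - w 0 = s * ypd (ypd h i) j ((y + t1 *\<^sub>R ax i) + r1 *\<^sub>R ax j)"
    using mvt_any[of s w "\<lambda>r. ypd (ypd h i) j ((y + t1 *\<^sub>R ax i) + r *\<^sub>R ax j)", OF dw] by blast
  have "dist ((y + t1 *\<^sub>R ax i) + r1 *\<^sub>R ax j) y \<le> \<bar>t1\<bar> + \<bar>r1\<bar>"
    using norm_two_axes[of t1 i r1 j] by (simp add: dist_norm add.assoc)
  then have dxi: "dist ((y + t1 *\<^sub>R ax i) + r1 *\<^sub>R ax j) y \<le> 2 * \<bar>s\<bar>" using t1 r1 by linarith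
  have "h (y + s *\<^sub>R ax i + s *\<^sub>R ax j) - h (y + s *\<^sub>R ax i) - h (y + s *\<^sub>R ax j) + h y = u s - u 0"
    by (simp add: u_def add_ac)
  also have "\<dots> = s * (w s - w 0)" unfolding m1 by (simp add: w_def add_ac)
  also have "\<dots> = s^2 * ypd (ypd h i) j ((y + t1 *\<^sub>R ax i) + r1 *\<^sub>R ax j)"
    unfolding m2 by (simp add: power2_eq_square)
  finally show ?thesis using dxi by blast
qed

lemma abs_contra: "\<bar>a - c\<bar> < \<bar>c - d\<bar>/2 \<Longrightarrow> \<bar>b - d\<bar> < \<bar>c - d\<bar>/2 \<Longrightarrow> a = b \<Longrightarrow> False"
  for a b c d :: real
  by (auto simp: abs_if split: if_splits)

lemma clairaut:
  fixes h :: "real^'n \<Rightarrow> real"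
  assumes V: "open V" and sm: "ysm V h" and y: "y \<in> V"
  shows "ypd (ypd h i) j y = ypd (ypd h j) i y"
proof (rule ccontr)
  let ?D1 = "ypd (ypd h i) j" and ?D2 = "ypd (ypd h j) i"
  assume ne: "?D1 y \<noteq> ?D2 y"
  define e where "e = \<bar>?D1 y - ?D2 y\<bar> / 2"
  have e: "e > 0" using ne by (simp add: e_def)
  have c1: "continuous_on V ?D1" by (intro ysm_cont ysm_ypd sm)
  have c2: "continuous_on V ?D2" by (intro ysm_cont ysm_ypd sm)
  have "eventually (\<lambda>z. z \<in> V \<and> \<bar>?D1 z - ?D1 y\<bar> < e \<and> \<bar>?D2 z - ?D2 y\<bar> < e) (nhds y)"
    using eventually_nhds_in_open[OF V y] cont_at_ev[OF V c1 y e] cont_at_ev[OF V c2 y e]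
    by (simp add: eventually_conj_iff)
  then obtain d where d: "d > 0"
    and dP: "\<And>z. dist z y < d \<Longrightarrow> z \<in> V \<and> \<bar>?D1 z - ?D1 y\<bar> < e \<and> \<bar>?D2 z - ?D2 y\<bar> < e"
    unfolding eventually_nhds_metric by blast
  have dV: "\<And>z. dist z y < d \<Longrightarrow> z \<in> V" using dP by blast
  define s where "s = d / 4"
  have s: "2 * \<bar>s\<bar> < d" "s \<noteq> 0" using d by (auto simp: s_def)
  obtain \<xi> where xi: "dist \<xi> y \<le> 2 * \<bar>s\<bar>"
    and e1: "h (y + s *\<^sub>R ax i + s *\<^sub>R ax j) - h (y + s *\<^sub>R ax i) - h (y + s *\<^sub>R ax j) + h y = s^2 * ?D1 \<xi>"
    using clairaut_aux[OF sm dV s(1), where i=i and j=j] by blast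
  obtain \<eta> where eta: "dist \<eta> y \<le> 2 * \<bar>s\<bar>"
    and e2: "h (y + s *\<^sub>R ax j + s *\<^sub>R ax i) - h (y + s *\<^sub>R ax j) - h (y + s *\<^sub>R ax i) + h y = s^2 * ?D2 \<eta>"
    using clairaut_aux[OF sm dV s(1), where i=j and j=i] by blast
  have sw: "y + s *\<^sub>R ax j + s *\<^sub>R ax i = y + s *\<^sub>R ax i + s *\<^sub>R ax j" by (simp add: add_ac)
  have "s^2 * ?D1 \<xi> = s^2 * ?D2 \<eta>" using e1 e2[unfolded sw] by linarith
  then have eq: "?D1 \<xi> = ?D2 \<eta>" using s(2) by simp
  have "\<bar>?D1 \<xi> - ?D1 y\<bar> < e" "\<bar>?D2 \<eta> - ?D2 y\<bar> < e" using dP[of \<xi>] dP[of \<eta>] xi eta s(1) by linarith+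
  then show False using eq unfolding e_def by (rule abs_contra)
qed

lemma euler:
  fixes h :: "real^'n \<Rightarrow> real"
  assumes V: "open V" and sm: "ysm V h" and y: "y \<in> V"
    and hom: "\<And>z t. z \<in> V \<Longrightarrow> t > 0 \<Longrightarrow> h (t *\<^sub>R z) = t powr d * h z"
  shows "(\<Sum>k\<in>UNIV. y$k * ypd h k y) = d * h y"
proof -
  define D where "D = (\<Sum>k\<in>UNIV. y$k * ypd h k y)"
  have fd: "(h has_derivative (\<lambda>v. \<Sum>k\<in>UNIV. v$k * ypd h k y)) (at ((\<lambda>t::real. t *\<^sub>R y) 1))"
    using ysm_frechet[OF V sm y] by simp
  have d1: "((\<lambda>t::real. t *\<^sub>R y) has_derivative (\<lambda>s. s *\<^sub>R y)) (at 1)"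
    by (auto intro!: derivative_eq_intros)
  have "((\<lambda>t. h (t *\<^sub>R y)) has_derivative (\<lambda>s. \<Sum>k\<in>UNIV. (s *\<^sub>R y)$k * ypd h k y)) (at 1)"
    using has_derivative_compose[OF d1 fd] by simp
  moreover have "(\<lambda>s. \<Sum>k\<in>UNIV. (s *\<^sub>R y)$k * ypd h k y) = (*) D"
    by (rule ext) (simp add: D_def sum_distrib_left[symmetric] mult_ac)
  ultimately have A: "((\<lambda>t. h (t *\<^sub>R y)) has_real_derivative D) (at 1)"
    by (simp add: has_field_derivative_def)
  have B0: "((\<lambda>t. t powr d * h y) has_real_derivative (d * 1 powr (d - 1)) * h y) (at 1)"
    by (intro DERIV_cmult_right has_real_derivative_powr) simp
  have ev: "eventually (\<lambda>t. t powr d * h y = h (t *\<^sub>R y)) (nhds (1::real))"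
  proof -
    have "eventually (\<lambda>t::real. t > 0) (nhds 1)"
      by (rule eventually_nhds_in_open[of "{0<..}", simplified]) auto
    then show ?thesis by eventually_elim (simp add: hom y)
  qed
  have B: "((\<lambda>t. h (t *\<^sub>R y)) has_real_derivative d * h y) (at 1)"
    using B0 DERIV_cong_ev[OF refl ev refl] by simp
  show ?thesis using DERIV_unique[OF A B] by (simp add: D_def)
qed

lemma hom_ypd:
  fixes h :: "real^'n \<Rightarrow> real"
  assumes V: "open V" and sm: "ysm V h"
    and hom: "\<And>z t. z \<in> V \<Longrightarrow> t > 0 \<Longrightarrow> h (t *\<^sub>R z) = t powr d * h z"
    and z: "z \<in> V" and t: "t > 0"
  shows "ypd h i (t *\<^sub>R z) = t powr (d - 1) * ypd h i z"
proof (rule ypd_eqI)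
  have D0: "((\<lambda>r. h (z + r *\<^sub>R ax i)) has_real_derivative ypd h i z) (at ((\<lambda>s. s / t) 0))"
    using ypd_DERIV0[OF sm z] by simp
  have Dg: "((\<lambda>s. s / t) has_real_derivative 1 / t) (at 0)"
    using t by (auto intro!: derivative_eq_intros)
  have D1: "((\<lambda>s. t powr d * h (z + (s / t) *\<^sub>R ax i)) has_real_derivative t powr d * (ypd h i z * (1/t))) (at 0)"
    by (intro DERIV_cmult DERIV_chain2[OF D0 Dg])
  have ev: "eventually (\<lambda>s. t powr d * h (z + (s / t) *\<^sub>R ax i) = h (t *\<^sub>R z + s *\<^sub>R ax i)) (nhds 0)"
    using ev_line[OF V z, of "(1/t) *\<^sub>R ax i"]
  proof eventually_elim
    case (elim s)
    have zz: "z + (s / t) *\<^sub>R ax i \<in> V" using elim t by (simp add: divide_inverse mult.commute)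
    have "t *\<^sub>R (z + (s / t) *\<^sub>R ax i) = t *\<^sub>R z + s *\<^sub>R ax i"
      using t by (simp add: scaleR_add_right)
    then show ?case using hom[OF zz t] by simp
  qed
  have "t powr d * (ypd h i z * (1/t)) = t powr (d - 1) * ypd h i z"
    using t by (simp add: powr_diff)
  then show "((\<lambda>s. h (t *\<^sub>R z + s *\<^sub>R ax i)) has_real_derivative t powr (d - 1) * ypd h i z) (at 0)"
    using D1 DERIV_cong_ev[OF refl ev refl] by simp
qed



lemma ypd_mult:
  assumes "ysm V f" "ysm V g" "p \<in> V"
  shows "ypd (\<lambda>z. f z * g z) i p = ypd f i p * g p + f p * ypd g i p"
proof (rule ypd_eqI)
  show "((\<lambda>t. f (p + t *\<^sub>R ax i) * g (p + t *\<^sub>R ax i)) has_real_derivative ypd f i p * g p + f p * ypd g i p) (at 0)"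
    using DERIV_mult[OF ypd_DERIV0[OF assms(1,3)] ypd_DERIV0[OF assms(2,3)], of i i] by (simp add: mult.commute)
qed

lemma ypd_cmult_mult:
  assumes "ysm V f" "ysm V g" "p \<in> V"
  shows "ypd (\<lambda>z. c * (f z * g z)) i p = c * (ypd f i p * g p + f p * ypd g i p)"
proof (rule ypd_eqI)
  show "((\<lambda>t. c * (f (p + t *\<^sub>R ax i) * g (p + t *\<^sub>R ax i))) has_real_derivative c * (ypd f i p * g p + f p * ypd g i p)) (at 0)"
    using DERIV_cmult[OF DERIV_mult[OF ypd_DERIV0[OF assms(1,3)] ypd_DERIV0[OF assms(2,3)]], of c i i]
    by (simp add: mult.commute)
qed

lemma ypd_cmult:
  assumes "ysm V f" "p \<in> V"
  shows "ypd (\<lambda>z. c * f z) i p = c * ypd f i p"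
  by (rule ypd_eqI) (intro DERIV_cmult ypd_DERIV0[OF assms])

lemma ypd_cmult_add_lin:
  assumes "ysm V f" "p \<in> V"
  shows "ypd (\<lambda>z. c * f z + b \<bullet> z) i p = c * ypd f i p + b $ i"
proof (rule ypd_eqI)
  have l: "((\<lambda>t. b \<bullet> (p + t *\<^sub>R ax i)) has_real_derivative b $ i) (at 0)"
  proof -
    have "((\<lambda>t. b \<bullet> p + t * b $ i) has_real_derivative b $ i) (at 0)"
      by (auto intro!: derivative_eq_intros)
    moreover have "(\<lambda>t. b \<bullet> (p + t *\<^sub>R ax i)) = (\<lambda>t. b \<bullet> p + t * b $ i)"
      by (auto simp: inner_add_right inner_axis)
    ultimately show ?thesis by simp
  qed
  show "((\<lambda>t. c * f (p + t *\<^sub>R ax i) + b \<bullet> (p + t *\<^sub>R ax i)) has_real_derivative c * ypd f i p + b $ i) (at 0)"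
    by (intro DERIV_add DERIV_cmult ypd_DERIV0[OF assms] l)
qed

lemma ypd_cmult_add_const:
  assumes "ysm V f" "p \<in> V"
  shows "ypd (\<lambda>z. c * f z + a) i p = c * ypd f i p"
proof (rule ypd_eqI)
  show "((\<lambda>t. c * f (p + t *\<^sub>R ax i) + a) has_real_derivative c * ypd f i p) (at 0)"
    using DERIV_add[OF DERIV_cmult[OF ypd_DERIV0[OF assms]] DERIV_const, of c i a] by simp
qed

lemma fund_formula:
  fixes L :: "real^'n \<Rightarrow> real^'n \<Rightarrow> real"
  assumes V: "open V" and sm: "ysm V (L x)" and y: "y \<in> V"
  shows "fund L x y = (\<chi> i j. ypd (L x) i y * ypd (L x) j y + L x y * ypd (ypd (L x) j) i y)"
proof -
  have inner: "ypd (\<lambda>w. (L x w)^2) j z = 2 * (L x z * ypd (L x) j z)" if z: "z \<in> V" for j z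
  proof -
    have "ypd (\<lambda>w. L x w * L x w) j z = ypd (L x) j z * L x z + L x z * ypd (L x) j z"
      by (rule ypd_mult[OF sm sm z])
    then show ?thesis by (simp add: power2_eq_square)
  qed
  have "ypd (\<lambda>z. ypd (\<lambda>w. (L x w)^2) j z) i y = ypd (\<lambda>z. 2 * (L x z * ypd (L x) j z)) i y" for i j
    by (rule ypd_local[OF V y]) (simp add: inner)
  also have "\<dots> i j = 2 * (ypd (L x) i y * ypd (L x) j y + L x y * ypd (ypd (L x) j) i y)" for i j
    using ypd_cmult_mult[OF sm ysm_ypd[OF sm, of j] y, where c=2 and i=i] by simp
  finally show ?thesis by (simp add: fund_def vec_eq_iff)
qed

lemma ypd_mult_add:
  assumes "ysm V f1" "ysm V g1" "ysm V f2" "ysm V g2" "p \<in> V"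
  shows "ypd (\<lambda>z. f1 z * g1 z + f2 z * g2 z) i p
       = ypd f1 i p * g1 p + f1 p * ypd g1 i p + (ypd f2 i p * g2 p + f2 p * ypd g2 i p)"
proof (rule ypd_eqI)
  show "((\<lambda>t. f1 (p + t *\<^sub>R ax i) * g1 (p + t *\<^sub>R ax i) + f2 (p + t *\<^sub>R ax i) * g2 (p + t *\<^sub>R ax i))
      has_real_derivative ypd f1 i p * g1 p + f1 p * ypd g1 i p + (ypd f2 i p * g2 p + f2 p * ypd g2 i p)) (at 0)"
    using DERIV_add[OF DERIV_mult[OF ypd_DERIV0[OF assms(1,5)] ypd_DERIV0[OF assms(2,5)]]
        DERIV_mult[OF ypd_DERIV0[OF assms(3,5)] ypd_DERIV0[OF assms(4,5)]], of i i i i]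
    by (simp add: mult.commute)
qed

lemma cartan_formula:
  fixes L :: "real^'n \<Rightarrow> real^'n \<Rightarrow> real"
  assumes V: "open V" and sm: "ysm V (L x)" and y: "y \<in> V"
  shows "cartan L x y i j k = (1/2) * (ypd (ypd (L x) i) k y * ypd (L x) j y + ypd (L x) i y * ypd (ypd (L x) j) k y
      + ypd (L x) k y * ypd (ypd (L x) j) i y + L x y * ypd (ypd (ypd (L x) j) i) k y)"
proof -
  have "ypd (\<lambda>z. fund L x z $ i $ j) k y
      = ypd (\<lambda>z. ypd (L x) i z * ypd (L x) j z + L x z * ypd (ypd (L x) j) i z) k y"
    by (rule ypd_local[OF V y]) (simp add: fund_formula[where L=L and x=x, OF V sm])
  also have "\<dots> = ypd (ypd (L x) i) k y * ypd (L x) j y + ypd (L x) i y * ypd (ypd (L x) j) k y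
      + (ypd (L x) k y * ypd (ypd (L x) j) i y + L x y * ypd (ypd (ypd (L x) j) i) k y)"
    by (rule ypd_mult_add[OF ysm_ypd[OF sm] ysm_ypd[OF sm] sm ysm_ypd[OF ysm_ypd[OF sm]] y])
  finally show ?thesis by (simp add: cartan_def add.assoc)
qed

lemma posdef_inv:
  fixes M :: "real^'n^'n"
  assumes "\<And>v. v \<noteq> 0 \<Longrightarrow> v \<bullet> (M *v v) > 0"
  shows "invertible M"
proof -
  have "\<forall>x. M *v x = 0 \<longrightarrow> x = 0"
  proof (intro allI impI)
    fix x assume "M *v x = 0"
    then show "x = 0" using assms[of x] by (cases "x = 0") auto
  qed
  then show ?thesis
    unfolding invertible_left_inverse matrix_left_invertible_ker[symmetric] .
qed

theorem lemma3:
  fixes U :: "(real^'n) set"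
    and L :: "real^'n \<Rightarrow> real^'n \<Rightarrow> real"
    and \<sigma> :: "real^'n \<Rightarrow> real"
    and b :: "real^'n \<Rightarrow> real^'n"
  assumes "open U"
    and "finsler U L"
    and "smooth_on U \<sigma>"
    and "\<And>i. smooth_on U (\<lambda>x. b x $ i)"
    and "finsler U (\<lambda>x y. exp (\<sigma> x) * L x y + b x \<bullet> y)"
    and "x \<in> U" and "y \<noteq> 0"
  shows "torsion (\<lambda>x y. exp (\<sigma> x) * L x y + b x \<bullet> y) x y i =
           torsion L x y i
           + (real CARD('n) + 1) / (2 * (exp (\<sigma> x) * L x y + b x \<bullet> y))
             * (b x $ i - ((b x \<bullet> y) / L x y) * ypd (L x) i y)"
proof -
  define V :: "(real^'n) set" where "V = UNIV - {0}"
  have V: "open V" unfolding V_def by (intro open_Diff open_UNIV closed_singleton)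
  have yV: "y \<in> V" using assms(7) by (simp add: V_def)
  define Ls where "Ls = (\<lambda>x y. exp (\<sigma> x) * L x y + b x \<bullet> y)"
  note fL = assms(2)[unfolded finsler_def]
  note fLs = assms(5)[folded Ls_def, unfolded finsler_def]
  have smf: "ysm V (L x)" using smooth_to_ysm[OF conjunct1[OF fL] assms(6)] by (simp add: V_def)
  have smfs: "ysm V (Ls x)" using smooth_to_ysm[OF conjunct1[OF fLs] assms(6)] by (simp add: V_def)
  define f where "f = L x"
  define c where "c = exp (\<sigma> x)"
  define bb where "bb = b x"
  have c: "c > 0" by (simp add: c_def)
  have Ls_x: "Ls x = (\<lambda>w. c * f w + bb \<bullet> w)" by (simp add: Ls_def c_def f_def bb_def)
  have F: "f y > 0" using fL assms(6,7) by (simp add: f_def)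
  have G: "Ls x y > 0" using fLs assms(6,7) by simp
  have hom: "\<And>z t. z \<in> V \<Longrightarrow> t > 0 \<Longrightarrow> f (t *\<^sub>R z) = t powr 1 * f z"
    using fL assms(6) by (simp add: V_def f_def)
  note smf = smf[folded f_def]
  have hom0: "\<And>z t. z \<in> V \<Longrightarrow> t > 0 \<Longrightarrow> ypd f i (t *\<^sub>R z) = t powr (1 - 1) * ypd f i z" for i
    by (rule hom_ypd[OF V smf hom])
  have hom1: "\<And>z t. z \<in> V \<Longrightarrow> t > 0 \<Longrightarrow> ypd (ypd f j) i (t *\<^sub>R z) = t powr (1 - 1 - 1) * ypd (ypd f j) i z" for i j
    by (rule hom_ypd[OF V ysm_ypd[OF smf] hom0])
  have E1: "(\<Sum>k\<in>UNIV. y$k * ypd f k y) = f y" using euler[OF V smf yV hom] by simp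
  have E0: "(\<Sum>k\<in>UNIV. y$k * ypd (ypd f i) k y) = 0" for i using euler[OF V ysm_ypd[OF smf] yV hom0] by simp
  have Em: "(\<Sum>k\<in>UNIV. y$k * ypd (ypd (ypd f j) i) k y) = - ypd (ypd f j) i y" for i j
    using euler[OF V ysm_ypd[OF ysm_ypd[OF smf]] yV hom1] by simp
  have cl: "\<And>z. z \<in> V \<Longrightarrow> ypd (ypd f i) j z = ypd (ypd f j) i z" for i j
    by (rule clairaut[OF V smf])
  have cl2: "ypd (ypd (ypd f i) j) k y = ypd (ypd (ypd f i) k) j y" for i j k
    by (rule clairaut[OF V ysm_ypd[OF smf] yV])
  define l where "l = (\<chi> k. ypd f k y)"
  define H where "H = (\<chi> a q. ypd (ypd f q) a y)"
  define T where "T = (\<lambda>i j k. ypd (ypd (ypd f j) i) k y)"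
  have Hs: "H$i$j = H$j$i" for i j using cl[OF yV, of j i] by (simp add: H_def)
  have Hy: "(\<Sum>j\<in>UNIV. H$i$j * y$j) = 0" for i
  proof -
    have hj: "H$i$j * y$j = y$j * ypd (ypd f i) j y" for j
      using cl[OF yV, of j i] by (simp add: H_def mult.commute)
    have "(\<Sum>j\<in>UNIV. H$i$j * y$j) = (\<Sum>j\<in>UNIV. y$j * ypd (ypd f i) j y)"
      by (simp add: hj)
    then show ?thesis using E0 by simp
  qed
  have ly: "l \<bullet> y = f y" using E1 by (simp add: l_def inner_sum mult.commute)
  have Ty1: "(\<Sum>k\<in>UNIV. T i j k * y$k) = - H$i$j" for i j
    using Em[of j i] by (simp add: T_def H_def mult.commute)
  have Ty2: "(\<Sum>j\<in>UNIV. T i j k * y$j) = - H$i$k" for i k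
  proof -
    have "T i j k = ypd (ypd (ypd f i) k) j y" for j
    proof -
      have "T i j k = ypd (ypd (ypd f i) j) k y"
        unfolding T_def by (rule ypd_local[OF V yV]) (simp add: cl)
      then show ?thesis using cl2 by simp
    qed
    then have "(\<Sum>j\<in>UNIV. T i j k * y$j) = (\<Sum>j\<in>UNIV. y$j * ypd (ypd (ypd f i) k) j y)"
      by (simp add: mult.commute)
    also have "\<dots> = - ypd (ypd f i) k y" by (rule Em)
    finally show ?thesis using cl[OF yV, of k i] by (simp add: H_def)
  qed
  have gdef: "fund L x y = (\<chi> i j. l$i*l$j + f y * H$i$j)"
    using fund_formula[where L=L and x=x, OF V smf[unfolded f_def] yV] by (simp add: l_def H_def f_def)
  have invg: "invertible (fund L x y)" using fL assms(6,7) by (intro posdef_inv) auto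
  have fs1: "ypd (Ls x) i z = c * ypd f i z + bb$i" if "z \<in> V" for i z
    unfolding Ls_x by (rule ypd_cmult_add_lin[OF smf that])
  have fs2: "ypd (ypd (Ls x) j) i z = c * ypd (ypd f j) i z" if z: "z \<in> V" for i j z
  proof -
    have "ypd (ypd (Ls x) j) i z = ypd (\<lambda>w. c * ypd f j w + bb$j) i z"
      by (rule ypd_local[OF V z]) (simp add: fs1)
    also have "\<dots> = c * ypd (ypd f j) i z" by (rule ypd_cmult_add_const[OF ysm_ypd[OF smf] z])
    finally show ?thesis .
  qed
  have fs3: "ypd (ypd (ypd (Ls x) j) i) k y = c * T i j k" for i j k
  proof -
    have "ypd (ypd (ypd (Ls x) j) i) k y = ypd (\<lambda>w. c * ypd (ypd f j) i w) k y"
      by (rule ypd_local[OF V yV]) (simp add: fs2)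
    also have "\<dots> = c * T i j k" unfolding T_def by (rule ypd_cmult[OF ysm_ypd[OF ysm_ypd[OF smf]] yV])
    finally show ?thesis .
  qed
  have fsy: "Ls x y = c * f y + bb \<bullet> y" by (simp add: Ls_x)
  have Adef: "fund Ls x y = (\<chi> i j. (c*l$i + bb$i)*(c*l$j + bb$j) + Ls x y * (c*H$i$j))"
    using fund_formula[where L=Ls and x=x, OF V smfs yV] by (simp add: fs1[OF yV] fs2[OF yV] l_def H_def)
  have invA: "invertible (fund Ls x y)" using fLs assms(6,7) by (intro posdef_inv) auto
  have cs: "cartan Ls x y i j k = (1/2)*((c*H$k$i)*(c*l$j+bb$j) + (c*l$i+bb$i)*(c*H$k$j)
              + (c*l$k+bb$k)*(c*H$i$j) + Ls x y*(c*T i j k))" for j k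
    using cartan_formula[where L=Ls and x=x and i=i and j=j and k=k, OF V smfs yV] by (simp add: fs1[OF yV] fs2[OF yV] fs3 l_def H_def)
  have cL: "cartan L x y i j k = (1/2)*(H$k$i*l$j + l$i*H$k$j + l$k*H$i$j + f y*T i j k)" for j k
    using cartan_formula[where L=L and x=x and i=i and j=j and k=k, OF V smf[unfolded f_def] yV] by (simp add: l_def H_def T_def f_def)
  note core = alg_core[OF F c fsy G ly Hs Hy Ty1 Ty2 gdef invg Adef invA, of i]
  have t1: "torsion Ls x y i = (\<Sum>j\<in>UNIV. \<Sum>k\<in>UNIV. matrix_inv (fund Ls x y) $j$k *
      ((1/2)*((c*H$k$i)*(c*l$j+bb$j) + (c*l$i+bb$i)*(c*H$k$j)
              + (c*l$k+bb$k)*(c*H$i$j) + Ls x y*(c*T i j k))))"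
    by (simp add: torsion_def cs)
  have t2: "torsion L x y i = (\<Sum>j\<in>UNIV. \<Sum>k\<in>UNIV. matrix_inv (fund L x y) $j$k *
      ((1/2)*(H$k$i*l$j + l$i*H$k$j + l$k*H$i$j + f y*T i j k)))"
    by (simp add: torsion_def cL)
  have "torsion Ls x y i = torsion L x y i + (real CARD('n) + 1) / (2 * Ls x y) * (bb$i - (bb \<bullet> y)/f y * l$i)"
    unfolding t1 t2 by (rule core)
  then show ?thesis by (simp add: Ls_def bb_def f_def l_def c_def)
qed

end
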